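(* Let $K,T\subset\mathbb{R}^n$ be convex bodies, where $T$ is strictly convex and smooth, and let $q=(q_1,\dots,q_m)$ be a closed $(K,T)$-Minkowski billiard trajectory. Then for every $j\in\{1,\dots,m\}$ there is exactly one $K$-supporting hyperplane $H_j$ through $q_j$ such that $q_j$ minimizes $\bar q\mapsto\mu_{T^\circ}(\bar q-q_{j-1})+\mu_{T^\circ}(q_{j+1}-\bar q)$ over all $\bar q\in H_j$.
   Context: A convex body is a compact convex set in $\mathbb{R}^n$ containing the origin in its interior; it is smooth if through each boundary point there is a unique supporting hyperplane. For a convex body $T$, $T^\circ$ is its polar body and $\mu_{T^\circ}(x)=\min\{t\ge 0: x\in tT^\circ\}$. For a convex set $C$ and $z\in\partial C$, $N_C(z)=\{v:\langle v,y-z\rangle\le 0\ \forall y\in C\}$. A closed polygonal curve $(q_1,\dots,q_m)$, $m\ge2$, always satisfies $q_j\ne q_{j+1}$ and $q_j\notin[q_{j-1},q_{j+1}]$ (indices mod $m$). A closed polygonal curve $q$ with vertices on $\partial K$ is a closed $(K,T)$-Minkowski billiard trajectory if there are $p_1,\dots,p_m\in\partial T$ with $q_{j+1}-q_j\in N_T(p_j)$ and $p_{j+1}-p_j\in -N_K(q_{j+1})$ for all $j$. *)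

theory Defs
  imports "HOL-Analysis.Analysis"
begin

definition convex_body :: "'a::euclidean_space set \<Rightarrow> bool" where
  "convex_body K \<longleftrightarrow> compact K \<and> convex K \<and> 0 \<in> interior K"

definition supporting_hyperplane :: "'a::euclidean_space set \<Rightarrow> 'a \<Rightarrow> 'a set \<Rightarrow> bool" where
  "supporting_hyperplane C z H \<longleftrightarrow>
     (\<exists>v. v \<noteq> 0 \<and> H = {y. v \<bullet> y = v \<bullet> z} \<and> (\<forall>y\<in>C. v \<bullet> y \<le> v \<bullet> z))"

definition smooth_body :: "'a::euclidean_space set \<Rightarrow> bool" where
  "smooth_body C \<longleftrightarrow> (\<forall>z\<in>frontier C. \<exists>!H. supporting_hyperplane C z H)"

definition strictly_convex :: "'a::euclidean_space set \<Rightarrow> bool" where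
  "strictly_convex C \<longleftrightarrow> convex C \<and>
     (\<forall>x\<in>C. \<forall>y\<in>C. x \<noteq> y \<longrightarrow> open_segment x y \<subseteq> interior C)"

definition polar_body :: "'a::euclidean_space set \<Rightarrow> 'a set" where
  "polar_body T = {y. \<forall>x\<in>T. x \<bullet> y \<le> 1}"

definition gauge_fun :: "'a::euclidean_space set \<Rightarrow> 'a \<Rightarrow> real" where
  "gauge_fun C x = Inf {t. t \<ge> 0 \<and> x \<in> (\<lambda>v. t *\<^sub>R v) ` C}"

definition normal_cone :: "'a::euclidean_space set \<Rightarrow> 'a \<Rightarrow> 'a set" where
  "normal_cone C z = {v. \<forall>y\<in>C. v \<bullet> (y - z) \<le> 0}"

text \<open>Closed polygonal curve with m vertices q 0, ..., q (m-1); indices taken mod m.\<close>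
definition closed_polygonal :: "nat \<Rightarrow> (nat \<Rightarrow> 'a::euclidean_space) \<Rightarrow> bool" where
  "closed_polygonal m q \<longleftrightarrow> m \<ge> 2 \<and>
     (\<forall>j<m. q j \<noteq> q ((j + 1) mod m) \<and>
            q j \<notin> closed_segment (q ((j + m - 1) mod m)) (q ((j + 1) mod m)))"

definition minkowski_billiard :: "'a::euclidean_space set \<Rightarrow> 'a set \<Rightarrow> nat \<Rightarrow> (nat \<Rightarrow> 'a) \<Rightarrow> bool" where
  "minkowski_billiard K T m q \<longleftrightarrow> closed_polygonal m q \<and> (\<forall>j<m. q j \<in> frontier K) \<and>
     (\<exists>p. (\<forall>j<m. p j \<in> frontier T) \<and>
          (\<forall>j<m. q ((j + 1) mod m) - q j \<in> normal_cone T (p j) \<and>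
                 p ((j + 1) mod m) - p j \<in> uminus ` normal_cone K (q ((j + 1) mod m))))"

end

theory Submission imports Defs begin

lemma maxim_exists:
  fixes T :: "'a::euclidean_space set"
  assumes "convex_body T"
  shows "\<exists>p\<in>T. \<forall>y\<in>T. x \<bullet> y \<le> x \<bullet> p"
proof -
  have "compact T" "T \<noteq> {}" using assms interior_subset unfolding convex_body_def by auto
  moreover have "continuous_on T (\<lambda>y. x \<bullet> y)" by (intro continuous_intros)
  ultimately show ?thesis using continuous_attains_sup by blast
qed

lemma int_ball:
  fixes T :: "'a::euclidean_space set"
  assumes "convex_body T"
  obtains e where "e > 0" "ball 0 e \<subseteq> T"
  using assms unfolding convex_body_def mem_interior by blast

lemma pos_dir:
  fixes T :: "'a::euclidean_space set"
  assumes "convex_body T" "x \<noteq> 0"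
  shows "\<exists>y\<in>T. x \<bullet> y > 0"
proof -
  obtain e where e: "e > 0" "ball 0 e \<subseteq> T" using int_ball assms(1) by blast
  define y where "y = (e / 2 / norm x) *\<^sub>R x"
  have "norm y = e/2" using e assms(2) by (simp add: y_def)
  hence "y \<in> T" using e by auto
  moreover have "x \<bullet> y = e / 2 * norm x" using assms(2)
    by (simp add: y_def power2_norm_eq_inner[symmetric] power2_eq_square)
  moreover have "e / 2 * norm x > 0" using e assms(2) by simp
  ultimately show ?thesis by (intro bexI[of _ y]) auto
qed

lemma gauge_eq:
  fixes T :: "'a::euclidean_space set"
  assumes cb: "convex_body T" and p: "p \<in> T" and mx: "\<forall>y\<in>T. x \<bullet> y \<le> x \<bullet> p"
  shows "gauge_fun (polar_body T) x = x \<bullet> p"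
proof -
  have T0: "0 \<in> T" using cb interior_subset unfolding convex_body_def by blast
  have s0: "0 \<le> x \<bullet> p" using mx T0 by fastforce
  have mem: "x \<in> (\<lambda>v. t *\<^sub>R v) ` polar_body T \<longleftrightarrow> x \<bullet> p \<le> t" if t: "t > 0" for t
  proof
    assume "x \<in> (\<lambda>v. t *\<^sub>R v) ` polar_body T"
    then obtain v where v: "x = t *\<^sub>R v" "\<forall>y\<in>T. y \<bullet> v \<le> 1" unfolding polar_body_def by auto
    have "p \<bullet> v \<le> 1" using v p by auto
    hence "t * (p \<bullet> v) \<le> t" using t by (simp add: mult_left_le)
    thus "x \<bullet> p \<le> t" using v by (simp add: inner_commute)
  next
    assume h: "x \<bullet> p \<le> t"
    have "inverse t *\<^sub>R x \<in> polar_body T" unfolding polar_body_def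
    proof safe
      fix y assume "y \<in> T"
      hence "y \<bullet> x \<le> t" using mx h by (simp add: inner_commute) (smt (verit) inner_commute)
      thus "y \<bullet> inverse t *\<^sub>R x \<le> 1" using t by (simp add: field_simps)
    qed
    moreover have "x = t *\<^sub>R (inverse t *\<^sub>R x)" using t by simp
    ultimately show "x \<in> (\<lambda>v. t *\<^sub>R v) ` polar_body T" by blast
  qed
  have pol0: "0 \<in> polar_body T" unfolding polar_body_def by simp
  have mem0: "x \<in> (\<lambda>v. 0 *\<^sub>R v) ` polar_body T \<longleftrightarrow> x = 0" using pol0 by auto
  have S: "{t. t \<ge> 0 \<and> x \<in> (\<lambda>v. t *\<^sub>R v) ` polar_body T} = {x \<bullet> p..}"
  proof (intro set_eqI iffI)
    fix t assume "t \<in> {t. t \<ge> 0 \<and> x \<in> (\<lambda>v. t *\<^sub>R v) ` polar_body T}"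
    hence t: "t \<ge> 0" "x \<in> (\<lambda>v. t *\<^sub>R v) ` polar_body T" by auto
    show "t \<in> {x \<bullet> p..}"
    proof (cases "t = 0")
      case True
      then show ?thesis using t mem0 by simp
    next
      case False
      then show ?thesis using t mem by simp
    qed
  next
    fix t assume "t \<in> {x \<bullet> p..}"
    hence t: "x \<bullet> p \<le> t" by simp
    show "t \<in> {t. t \<ge> 0 \<and> x \<in> (\<lambda>v. t *\<^sub>R v) ` polar_body T}"
    proof (cases "t = 0")
      case True
      have "x = 0"
      proof (rule ccontr)
        assume "x \<noteq> 0"
        then obtain y where "y \<in> T" "x \<bullet> y > 0" using pos_dir[OF cb] by blast
        hence "x \<bullet> p > 0" using mx by fastforce
        thus False using t True by simp
      qed
      then show ?thesis using True mem0 by simp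
    next
      case False
      hence "t > 0" using t s0 by simp
      then show ?thesis using t mem by simp
    qed
  qed
  show ?thesis unfolding gauge_fun_def S by simp
qed

lemma gauge_ge:
  fixes T :: "'a::euclidean_space set"
  assumes cb: "convex_body T" and p: "p \<in> T"
  shows "x \<bullet> p \<le> gauge_fun (polar_body T) x"
proof -
  obtain p' where "p' \<in> T" "\<forall>y\<in>T. x \<bullet> y \<le> x \<bullet> p'" using maxim_exists[OF cb] by blast
  thus ?thesis using gauge_eq[OF cb] p by auto
qed

lemma unique_max:
  fixes T :: "'a::euclidean_space set"
  assumes sc: "strictly_convex T" and x: "x \<noteq> 0" and p: "p \<in> T" "\<forall>y\<in>T. x \<bullet> y \<le> x \<bullet> p"
    and p': "p' \<in> T" "\<forall>y\<in>T. x \<bullet> y \<le> x \<bullet> p'"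
  shows "p' = p"
proof (rule ccontr)
  assume ne: "p' \<noteq> p"
  have eq: "x \<bullet> p = x \<bullet> p'" using p p' by force
  have "open_segment p p' \<subseteq> interior T" using sc ne p p' unfolding strictly_convex_def by auto
  hence "midpoint p p' \<in> interior T" using ne midpoint_in_open_segment[of p p'] by blast
  then obtain e where e: "e > 0" "ball (midpoint p p') e \<subseteq> T" using mem_interior by blast
  define y where "y = midpoint p p' + (e / 2 / norm x) *\<^sub>R x"
  have "dist (midpoint p p') y = e/2" using e x by (simp add: y_def dist_norm)
  hence "y \<in> T" using e by auto
  moreover have "x \<bullet> y = x \<bullet> p + e / 2 * norm x" using x eq
    by (simp add: y_def midpoint_def inner_add_right power2_norm_eq_inner[symmetric] power2_eq_square field_simps)
  moreover have "e / 2 * norm x > 0" using e x by simp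
  ultimately show False using p(2) by fastforce
qed


lemma core:
  fixes T :: "'a::euclidean_space set"
  assumes cb: "convex_body T"
    and P: "P \<in> T" "\<forall>y\<in>T. a \<bullet> y \<le> a \<bullet> P" "\<And>P'. P' \<in> T \<Longrightarrow> \<forall>y\<in>T. a \<bullet> y \<le> a \<bullet> P' \<Longrightarrow> P' = P"
    and Q: "Q \<in> T" "\<forall>y\<in>T. b \<bullet> y \<le> b \<bullet> Q" "\<And>Q'. Q' \<in> T \<Longrightarrow> \<forall>y\<in>T. b \<bullet> y \<le> b \<bullet> Q' \<Longrightarrow> Q' = Q"
    and neg: "(P - Q) \<bullet> d < 0"
  shows "\<exists>t>0. gauge_fun (polar_body T) (a + t *\<^sub>R d) + gauge_fun (polar_body T) (b - t *\<^sub>R d)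
              < gauge_fun (polar_body T) a + gauge_fun (polar_body T) b"
proof (rule ccontr)
  define G where "G = gauge_fun (polar_body T)"
  assume "\<not> ?thesis"
  hence C: "\<And>t. t > 0 \<Longrightarrow> G a + G b \<le> G (a + t *\<^sub>R d) + G (b - t *\<^sub>R d)"
    unfolding G_def by force
  have cT: "compact T" using cb unfolding convex_body_def by auto
  define t where "t n = inverse (real (Suc n))" for n
  have tpos: "t n > 0" for n unfolding t_def by simp
  have "\<forall>n. \<exists>z. z \<in> T \<times> T \<and> (\<forall>y\<in>T. (a + t n *\<^sub>R d) \<bullet> y \<le> (a + t n *\<^sub>R d) \<bullet> fst z)
            \<and> (\<forall>y\<in>T. (b - t n *\<^sub>R d) \<bullet> y \<le> (b - t n *\<^sub>R d) \<bullet> snd z)"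
  proof
    fix n
    obtain u where "u \<in> T" "\<forall>y\<in>T. (a + t n *\<^sub>R d) \<bullet> y \<le> (a + t n *\<^sub>R d) \<bullet> u" using maxim_exists[OF cb] by blast
    moreover obtain w where "w \<in> T" "\<forall>y\<in>T. (b - t n *\<^sub>R d) \<bullet> y \<le> (b - t n *\<^sub>R d) \<bullet> w" using maxim_exists[OF cb] by blast
    ultimately show "\<exists>z. z \<in> T \<times> T \<and> (\<forall>y\<in>T. (a + t n *\<^sub>R d) \<bullet> y \<le> (a + t n *\<^sub>R d) \<bullet> fst z)
            \<and> (\<forall>y\<in>T. (b - t n *\<^sub>R d) \<bullet> y \<le> (b - t n *\<^sub>R d) \<bullet> snd z)"
      by (intro exI[of _ "(u, w)"]) auto
  qed
  then obtain f where f: "\<And>n. f n \<in> T \<times> T" 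
    "\<And>n. \<forall>y\<in>T. (a + t n *\<^sub>R d) \<bullet> y \<le> (a + t n *\<^sub>R d) \<bullet> fst (f n)"
    "\<And>n. \<forall>y\<in>T. (b - t n *\<^sub>R d) \<bullet> y \<le> (b - t n *\<^sub>R d) \<bullet> snd (f n)"
    by metis
  have ineq: "0 \<le> (fst (f n) - snd (f n)) \<bullet> d" for n
  proof -
    let ?P = "fst (f n)" and ?Q = "snd (f n)" and ?s = "t n"
    have PT: "?P \<in> T" and QT: "?Q \<in> T" using f(1)[of n] by auto
    have e1: "G (a + ?s *\<^sub>R d) = (a + ?s *\<^sub>R d) \<bullet> ?P" unfolding G_def using gauge_eq[OF cb PT] f(2) by blast
    have e2: "G (b - ?s *\<^sub>R d) = (b - ?s *\<^sub>R d) \<bullet> ?Q" unfolding G_def using gauge_eq[OF cb QT] f(3) by blast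
    have e3: "G a = a \<bullet> P" unfolding G_def using gauge_eq[OF cb P(1) P(2)] .
    have e4: "G b = b \<bullet> Q" unfolding G_def using gauge_eq[OF cb Q(1) Q(2)] .
    have i1: "a \<bullet> ?P \<le> a \<bullet> P" using P(2) PT by blast
    have i2: "b \<bullet> ?Q \<le> b \<bullet> Q" using Q(2) QT by blast
    have "a \<bullet> P + b \<bullet> Q \<le> (a + ?s *\<^sub>R d) \<bullet> ?P + (b - ?s *\<^sub>R d) \<bullet> ?Q"
      using C[OF tpos[of n]] e1 e2 e3 e4 by simp
    also have "\<dots> = a \<bullet> ?P + b \<bullet> ?Q + ?s * ((?P - ?Q) \<bullet> d)"
      by (simp add: inner_add_left inner_diff_left inner_commute algebra_simps)
    finally have "0 \<le> ?s * ((?P - ?Q) \<bullet> d)" using i1 i2 by linarith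
    thus ?thesis using tpos[of n] by (simp add: zero_le_mult_iff)
  qed
  have "seq_compact (T \<times> T)" using compact_imp_seq_compact compact_Times[OF cT cT] by blast
  then obtain l r where l: "l \<in> T \<times> T" and r: "strict_mono r" and lim: "(f \<circ> r) \<longlonglongrightarrow> l"
    using f(1) unfolding seq_compact_def by metis
  have tr: "(\<lambda>n. t (r n)) \<longlonglongrightarrow> 0"
    using LIMSEQ_subseq_LIMSEQ[OF LIMSEQ_inverse_real_of_nat r] unfolding t_def o_def .
  have l1: "(\<lambda>n. fst (f (r n))) \<longlonglongrightarrow> fst l" using tendsto_fst[OF lim] unfolding o_def .
  have l2: "(\<lambda>n. snd (f (r n))) \<longlonglongrightarrow> snd l" using tendsto_snd[OF lim] unfolding o_def .
  have "fst l = P"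
  proof (rule P(3))
    show "fst l \<in> T" using l by auto
    show "\<forall>y\<in>T. a \<bullet> y \<le> a \<bullet> fst l"
    proof
      fix y assume y: "y \<in> T"
      have A: "(\<lambda>n. (a + t (r n) *\<^sub>R d) \<bullet> y) \<longlonglongrightarrow> (a + 0 *\<^sub>R d) \<bullet> y"
        by (intro tendsto_intros tr)
      have B: "(\<lambda>n. (a + t (r n) *\<^sub>R d) \<bullet> fst (f (r n))) \<longlonglongrightarrow> (a + 0 *\<^sub>R d) \<bullet> fst l"
        by (intro tendsto_intros tr l1)
      have "(a + 0 *\<^sub>R d) \<bullet> y \<le> (a + 0 *\<^sub>R d) \<bullet> fst l"
        by (rule LIMSEQ_le[OF A B]) (use f(2) y in blast)
      thus "a \<bullet> y \<le> a \<bullet> fst l" by simp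
    qed
  qed
  moreover have "snd l = Q"
  proof (rule Q(3))
    show "snd l \<in> T" using l by auto
    show "\<forall>y\<in>T. b \<bullet> y \<le> b \<bullet> snd l"
    proof
      fix y assume y: "y \<in> T"
      have A: "(\<lambda>n. (b - t (r n) *\<^sub>R d) \<bullet> y) \<longlonglongrightarrow> (b - 0 *\<^sub>R d) \<bullet> y"
        by (intro tendsto_intros tr)
      have B: "(\<lambda>n. (b - t (r n) *\<^sub>R d) \<bullet> snd (f (r n))) \<longlonglongrightarrow> (b - 0 *\<^sub>R d) \<bullet> snd l"
        by (intro tendsto_intros tr l2)
      have "(b - 0 *\<^sub>R d) \<bullet> y \<le> (b - 0 *\<^sub>R d) \<bullet> snd l"
        by (rule LIMSEQ_le[OF A B]) (use f(3) y in blast)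
      thus "b \<bullet> y \<le> b \<bullet> snd l" by simp
    qed
  qed
  moreover have "(\<lambda>n. (fst (f (r n)) - snd (f (r n))) \<bullet> d) \<longlonglongrightarrow> (fst l - snd l) \<bullet> d"
    by (intro tendsto_intros l1 l2)
  hence "0 \<le> (fst l - snd l) \<bullet> d" by (rule LIMSEQ_le_const) (use ineq in blast)
  ultimately show False using neg by simp
qed


lemma hyp_param:
  fixes g v :: "'a::euclidean_space"
  assumes "v \<noteq> 0" "g \<noteq> 0"
  shows "(\<exists>c. c \<noteq> 0 \<and> g = c *\<^sub>R v) \<or> (\<exists>d. v \<bullet> d = 0 \<and> g \<bullet> d < 0)"
proof -
  define c where "c = (g \<bullet> v) / (v \<bullet> v)"
  define d0 where "d0 = g - c *\<^sub>R v"
  have vv: "v \<bullet> v \<noteq> 0" using assms by simp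
  have vd: "v \<bullet> d0 = 0" unfolding d0_def c_def using vv by (simp add: inner_diff_right inner_commute)
  have gd: "g \<bullet> d0 = d0 \<bullet> d0"
  proof -
    have "g = d0 + c *\<^sub>R v" unfolding d0_def by simp
    hence "g \<bullet> d0 = d0 \<bullet> d0 + c * (v \<bullet> d0)" by (metis inner_add_left inner_scaleR_left)
    thus ?thesis using vd by simp
  qed
  show ?thesis
  proof (cases "d0 = 0")
    case True
    hence g: "g = c *\<^sub>R v" unfolding d0_def by simp
    hence "c \<noteq> 0" using assms(2) by auto
    thus ?thesis using g by blast
  next
    case False
    hence "g \<bullet> (- d0) < 0" using gd by simp
    then show ?thesis using vd by (intro disjI2 exI[of _ "- d0"]) simp
  qed
qed


lemma mod_prev: "(j::nat) < m \<Longrightarrow> ((j + m - 1) mod m + 1) mod m = j"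
proof -
  assume j: "j < m"
  have "((j + m - 1) mod m + 1) mod m = (j + m - 1 + 1) mod m" by (rule mod_add_left_eq)
  also have "j + m - 1 + 1 = j + m" using j by simp
  finally show ?thesis using j by simp
qed

theorem proposition3p3:
  fixes K T :: "'a::euclidean_space set" and q :: "nat \<Rightarrow> 'a" and m :: nat
  assumes "convex_body K" and "convex_body T"
    and "strictly_convex T" and "smooth_body T"
    and "minkowski_billiard K T m q"
  shows "\<forall>j<m. \<exists>!H. supporting_hyperplane K (q j) H \<and>
           (\<forall>qb\<in>H. gauge_fun (polar_body T) (q j - q ((j + m - 1) mod m))
                      + gauge_fun (polar_body T) (q ((j + 1) mod m) - q j)
                    \<le> gauge_fun (polar_body T) (qb - q ((j + m - 1) mod m))
                      + gauge_fun (polar_body T) (q ((j + 1) mod m) - qb))"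
proof (intro allI impI)
  fix j assume j: "j < m"
  note cb = assms(2)
  define G where "G = gauge_fun (polar_body T)"
  obtain p where poly: "closed_polygonal m q" and pT: "\<forall>j<m. p j \<in> frontier T"
    and nT: "\<forall>j<m. q ((j + 1) mod m) - q j \<in> normal_cone T (p j)"
    and nK: "\<forall>j<m. p ((j + 1) mod m) - p j \<in> uminus ` normal_cone K (q ((j + 1) mod m))"
    using assms(5) unfolding minkowski_billiard_def by blast
  define j' where "j' = (j + m - 1) mod m"
  define jn where "jn = (j + 1) mod m"
  have m2: "m \<ge> 2" using poly unfolding closed_polygonal_def by blast
  have j'm: "j' < m" unfolding j'_def using j by simp
  have j'n: "(j' + 1) mod m = j" unfolding j'_def using mod_prev[OF j] .
  define a where "a = q j - q j'"
  define b where "b = q jn - q j"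
  define P where "P = p j'"
  define Q where "Q = p j"
  have a0: "a \<noteq> 0" using poly j'm j'n unfolding closed_polygonal_def a_def by force
  have b0: "b \<noteq> 0" using poly j unfolding closed_polygonal_def b_def jn_def by force
  have notseg: "q j \<notin> closed_segment (q j') (q jn)"
    using poly j unfolding closed_polygonal_def j'_def jn_def by blast
  have clT: "closed T" using cb unfolding convex_body_def by (simp add: compact_imp_closed)
  have PT: "P \<in> T" using pT j'm clT frontier_subset_closed unfolding P_def by blast
  have QT: "Q \<in> T" using pT j clT frontier_subset_closed unfolding Q_def by blast
  have PF: "P \<in> frontier T" using pT j'm unfolding P_def by blast
  have aN: "a \<in> normal_cone T P" using nT j'm j'n unfolding a_def P_def by force
  have bN: "b \<in> normal_cone T Q" using nT j unfolding b_def Q_def jn_def by blast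
  have Pmax: "\<forall>y\<in>T. a \<bullet> y \<le> a \<bullet> P" using aN unfolding normal_cone_def by (auto simp: inner_diff_right)
  have Qmax: "\<forall>y\<in>T. b \<bullet> y \<le> b \<bullet> Q" using bN unfolding normal_cone_def by (auto simp: inner_diff_right)
  have gN: "\<forall>y\<in>K. (P - Q) \<bullet> y \<le> (P - Q) \<bullet> q j"
  proof -
    have "p j - p j' \<in> uminus ` normal_cone K (q j)" using nK j'm j'n by force
    then obtain w where w: "w \<in> normal_cone K (q j)" "p j - p j' = - w" by blast
    hence "P - Q = w" unfolding P_def Q_def by (simp add: algebra_simps)
    thus ?thesis using w(1) unfolding normal_cone_def by (auto simp: inner_diff_right)
  qed
  have Puniq: "\<And>P'. P' \<in> T \<Longrightarrow> \<forall>y\<in>T. a \<bullet> y \<le> a \<bullet> P' \<Longrightarrow> P' = P"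
    using unique_max[OF assms(3) a0 PT Pmax] by blast
  have Quniq: "\<And>Q'. Q' \<in> T \<Longrightarrow> \<forall>y\<in>T. b \<bullet> y \<le> b \<bullet> Q' \<Longrightarrow> Q' = Q"
    using unique_max[OF assms(3) b0 QT Qmax] by blast
  have gne: "P - Q \<noteq> 0"
  proof
    assume "P - Q = 0"
    hence PQ: "Q = P" by simp
    have Qmax': "\<forall>y\<in>T. b \<bullet> y \<le> b \<bullet> P" using Qmax PQ by simp
    have sa: "supporting_hyperplane T P {y. a \<bullet> y = a \<bullet> P}"
      unfolding supporting_hyperplane_def using a0 Pmax by blast
    have sb: "supporting_hyperplane T P {y. b \<bullet> y = b \<bullet> P}"
      unfolding supporting_hyperplane_def using b0 Qmax' by blast
    have Heq: "{y. a \<bullet> y = a \<bullet> P} = {y. b \<bullet> y = b \<bullet> P}"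
      using assms(4) PF sa sb unfolding smooth_body_def by blast
    have "b \<noteq> 0" by (fact b0)
    from hyp_param[OF a0 b0] obtain c where c: "c \<noteq> 0" "b = c *\<^sub>R a"
    proof (elim disjE exE conjE)
      fix d assume d: "a \<bullet> d = 0" "b \<bullet> d < 0"
      have "P + d \<in> {y. a \<bullet> y = a \<bullet> P}" using d by (simp add: inner_add_right)
      hence "b \<bullet> (P + d) = b \<bullet> P" using Heq by blast
      hence False using d by (simp add: inner_add_right)
      thus ?thesis ..
    qed
    show False
    proof (cases "c > 0")
      case True
      define u where "u = 1 / (1 + c)"
      have u: "0 \<le> u" "u \<le> 1" using True unfolding u_def by auto
      have qjn: "q jn = (1 + c) *\<^sub>R q j - c *\<^sub>R q j'"
        using c(2) unfolding a_def b_def by (simp add: algebra_simps)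
      have "(1 - u) *\<^sub>R q j' + u *\<^sub>R q jn = q j"
      proof -
        have "(1 - u) *\<^sub>R q j' + u *\<^sub>R q jn = (1 - u - u * c) *\<^sub>R q j' + (u * (1 + c)) *\<^sub>R q j"
          unfolding qjn by (simp add: algebra_simps)
        also have "1 - u - u * c = 0" using True unfolding u_def by (simp add: field_simps)
        also have "u * (1 + c) = 1" using True unfolding u_def by (simp add: field_simps)
        finally show ?thesis by simp
      qed
      hence "\<exists>u'. q j = (1 - u') *\<^sub>R q j' + u' *\<^sub>R q jn \<and> 0 \<le> u' \<and> u' \<le> 1" using u by metis
      hence "q j \<in> closed_segment (q j') (q jn)" unfolding closed_segment_def by simp
      thus False using notseg by blast
    next
      case False
      hence cneg: "c < 0" using c(1) by simp
      obtain e where e: "e > 0" "ball 0 e \<subseteq> T" using int_ball cb by blast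
      have zero: "\<forall>y\<in>T. a \<bullet> y = a \<bullet> P"
      proof
        fix y assume y: "y \<in> T"
        have "c * (a \<bullet> y) \<le> c * (a \<bullet> P)" using Qmax' y c(2) by simp
        hence "a \<bullet> P \<le> a \<bullet> y" using cneg by simp
        thus "a \<bullet> y = a \<bullet> P" using Pmax y by force
      qed
      define y where "y = (e / 2 / norm a) *\<^sub>R a"
      have "norm y = e/2" using e a0 by (simp add: y_def)
      hence yT: "y \<in> T" using e by auto
      have "a \<bullet> y = e / 2 * norm a" using a0
        by (simp add: y_def power2_norm_eq_inner[symmetric] power2_eq_square)
      moreover have "0 \<in> T" using e by auto
      ultimately show False using zero yT e a0 by force
    qed
  qed
  define H0 where "H0 = {y. (P - Q) \<bullet> y = (P - Q) \<bullet> q j}"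
  have GaP: "G a = a \<bullet> P" unfolding G_def using gauge_eq[OF cb PT Pmax] .
  have GbQ: "G b = b \<bullet> Q" unfolding G_def using gauge_eq[OF cb QT Qmax] .
  have minH0: "G (q j - q j') + G (q jn - q j) \<le> G (qb - q j') + G (q jn - qb)" if qb: "qb \<in> H0" for qb
  proof -
    have i1: "(qb - q j') \<bullet> P \<le> G (qb - q j')" unfolding G_def using gauge_ge[OF cb PT] .
    have i2: "(q jn - qb) \<bullet> Q \<le> G (q jn - qb)" unfolding G_def using gauge_ge[OF cb QT] .
    have h: "(P - Q) \<bullet> qb = (P - Q) \<bullet> q j" using qb unfolding H0_def by blast
    have "(qb - q j') \<bullet> P + (q jn - qb) \<bullet> Q = a \<bullet> P + b \<bullet> Q + ((P - Q) \<bullet> qb - (P - Q) \<bullet> q j)"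
      unfolding a_def b_def by (simp add: inner_diff_left inner_diff_right inner_commute algebra_simps)
    hence "(qb - q j') \<bullet> P + (q jn - qb) \<bullet> Q = G a + G b" using h GaP GbQ by simp
    thus ?thesis using i1 i2 unfolding a_def b_def by linarith
  qed
  show "\<exists>!H. supporting_hyperplane K (q j) H \<and>
           (\<forall>qb\<in>H. gauge_fun (polar_body T) (q j - q ((j + m - 1) mod m))
                      + gauge_fun (polar_body T) (q ((j + 1) mod m) - q j)
                    \<le> gauge_fun (polar_body T) (qb - q ((j + m - 1) mod m))
                      + gauge_fun (polar_body T) (q ((j + 1) mod m) - qb))"
    unfolding G_def[symmetric] j'_def[symmetric] jn_def[symmetric]
  proof (rule ex1I[of _ H0], intro conjI)
    show "supporting_hyperplane K (q j) H0"
      unfolding supporting_hyperplane_def H0_def using gne gN by blast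
    show "\<forall>qb\<in>H0. G (q j - q j') + G (q jn - q j) \<le> G (qb - q j') + G (q jn - qb)"
      using minH0 by blast
  next
    fix H assume H: "supporting_hyperplane K (q j) H \<and>
        (\<forall>qb\<in>H. G (q j - q j') + G (q jn - q j) \<le> G (qb - q j') + G (q jn - qb))"
    then obtain v where v: "v \<noteq> 0" "H = {y. v \<bullet> y = v \<bullet> q j}"
      unfolding supporting_hyperplane_def by blast
    from hyp_param[OF v(1) gne] show "H = H0"
    proof (elim disjE exE conjE)
      fix c assume c: "c \<noteq> 0" "P - Q = c *\<^sub>R v"
      show "H = H0" unfolding v(2) H0_def c(2) using c(1) by auto
    next
      fix d assume d: "v \<bullet> d = 0" "(P - Q) \<bullet> d < 0"
      obtain t where t: "t > 0" "G (a + t *\<^sub>R d) + G (b - t *\<^sub>R d) < G a + G b"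
        using core[OF cb PT Pmax Puniq QT Qmax Quniq d(2)] unfolding G_def by blast
      define qb where "qb = q j + t *\<^sub>R d"
      have "qb \<in> H" unfolding v(2) qb_def using d(1) by (simp add: inner_add_right)
      hence "G (q j - q j') + G (q jn - q j) \<le> G (qb - q j') + G (q jn - qb)" using H by blast
      moreover have "qb - q j' = a + t *\<^sub>R d" "q jn - qb = b - t *\<^sub>R d"
        unfolding qb_def a_def b_def by (simp_all add: algebra_simps)
      ultimately have False using t(2) unfolding a_def b_def by simp
      thus "H = H0" ..
    qed
  qed
qed

end
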